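(* Let $k$ be a field, $S=k[[x_1,\dots,x_d]]$, $n>1$ an integer, and $R=S^{(n)}$ the $n$-th Veronese subring of $S$. Let $L=x_1S\cap R$, which generates the divisor class group $\operatorname{Cl}(R)\cong\mathbb Z/n\mathbb Z$, and for $1\leq i\leq n-1$ let $L^{(i)}$ be the $i$-th symbolic power of $L$ (the rank one reflexive module representing $i[L]$ in $\operatorname{Cl}(R)$). Then the minimal number of generators of $L^{(i)}$ is $$\mu(L^{(i)})=\binom{n-i+d-1}{d-1}=\frac{(n+d-i-1)!}{(d-1)!\,(n-i)!}\quad\text{for } i=1,\dots,n-1,$$ i.e., the number of monomials of degree $n-i$ in $d$ variables.
   Context: The $n$-th Veronese subring $S^{(n)}$ is the subring of $S$ consisting of power series all of whose monomials have degree divisible by $n$ (the subring generated by monomials of degree $n$); it is a complete Cohen-Macaulay normal local domain with isolated singularity. For a normal domain $R$, $\operatorname{Cl}(R)$ is the group of isomorphism classes of rank one reflexive $R$-modules, with $[\operatorname{Hom}_R(I,J)]=[J]-[I]$. *)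

theory Defs
  imports "HOL-Algebra.Algebra"
begin

text \<open>Formal power series in d variables X_0,...,X_(d-1) over a field 'k, represented as
  coefficient functions on exponent vectors (nat \<Rightarrow> nat) supported on {0..<d}.\<close>

type_synonym 'k mps = "(nat \<Rightarrow> nat) \<Rightarrow> 'k"

definition exps :: "nat \<Rightarrow> (nat \<Rightarrow> nat) set" where
  "exps d = {a. \<forall>j\<ge>d. a j = 0}"

definition mdeg :: "nat \<Rightarrow> (nat \<Rightarrow> nat) \<Rightarrow> nat" where
  "mdeg d a = (\<Sum>j<d. a j)"

definition PS :: "nat \<Rightarrow> ('k::field) mps ring" where
  "PS d = \<lparr> carrier = {f. \<forall>a. a \<notin> exps d \<longrightarrow> f a = 0},
            Group.monoid.mult = (\<lambda>f g m. if m \<in> exps d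
                      then (\<Sum>a\<in>{a. a \<le> m}. f a * g (\<lambda>j. m j - a j)) else 0),
            Group.monoid.one = (\<lambda>a. if a = (\<lambda>_. 0) then 1 else 0),
            Ring.ring.zero = (\<lambda>_. 0),
            Ring.ring.add = (\<lambda>f g a. f a + g a) \<rparr>"

definition Veronese :: "nat \<Rightarrow> nat \<Rightarrow> ('k::field) mps ring" where
  "Veronese d n = (PS d) \<lparr> carrier :=
      {f \<in> carrier (PS d). \<forall>a. f a \<noteq> 0 \<longrightarrow> n dvd mdeg d a} \<rparr>"

text \<open>The first variable x_1 (index 0 here).\<close>
definition var1 :: "('k::field) mps" where
  "var1 = (\<lambda>a. if a = (\<lambda>j. if j = 0 then 1 else 0) then 1 else 0)"

definition Lideal :: "nat \<Rightarrow> nat \<Rightarrow> ('k::field) mps set" where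
  "Lideal d n = {var1 \<otimes>\<^bsub>PS d\<^esub> s | s. s \<in> carrier (PS d)} \<inter> carrier (Veronese d n)"

definition ideal_pow :: "('a, 'b) ring_scheme \<Rightarrow> 'a set \<Rightarrow> nat \<Rightarrow> 'a set" where
  "ideal_pow R I i = ((\<lambda>J. ideal_prod R J I) ^^ i) (carrier R)"

text \<open>Symbolic power of a prime ideal P: P^(i) = P^i R_P \<inter> R.\<close>
definition symbolic_power :: "('a, 'b) ring_scheme \<Rightarrow> 'a set \<Rightarrow> nat \<Rightarrow> 'a set" where
  "symbolic_power R P i =
     {r \<in> carrier R. \<exists>s \<in> carrier R - P. s \<otimes>\<^bsub>R\<^esub> r \<in> ideal_pow R P i}"

definition min_gens :: "('a, 'b) ring_scheme \<Rightarrow> 'a set \<Rightarrow> nat" where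
  "min_gens R I = (LEAST m. \<exists>G. finite G \<and> G \<subseteq> carrier R \<and> card G = m \<and> genideal R G = I)"

end

theory Submission
  imports Defs "HOL-Library.Multiset" "HOL-Library.Function_Algebras"
begin

definition mul :: "nat \<Rightarrow> ('k::field) mps \<Rightarrow> 'k mps \<Rightarrow> 'k mps" where
  "mul d f g = (\<lambda>m. if m \<in> exps d then (\<Sum>a\<in>{a. a \<le> m}. f a * g (\<lambda>j. m j - a j)) else 0)"

lemma PS_mult: "Group.monoid.mult (PS d) = mul d" by (simp add: PS_def mul_def[abs_def])
lemma PS_add: "Ring.ring.add (PS d) = (\<lambda>f g a. f a + g a)" by (simp add: PS_def)
lemma PS_zero: "Ring.ring.zero (PS d) = (\<lambda>_. 0)" by (simp add: PS_def)
lemma PS_one: "Group.monoid.one (PS d) = (\<lambda>a. if a = (\<lambda>_. 0) then 1 else 0)" by (simp add: PS_def)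
lemma PS_carrier: "carrier (PS d) = {f. \<forall>a. a \<notin> exps d \<longrightarrow> f a = 0}" by (simp add: PS_def)

lemma le_exps: assumes "a \<le> m" "m \<in> exps d" shows "a \<in> exps d"
  unfolding exps_def
proof (intro CollectI allI impI)
  fix j assume "d \<le> j"
  have "a j \<le> m j" using assms(1) by (simp add: le_fun_def)
  moreover have "m j = 0" using assms(2) \<open>d \<le> j\<close> by (simp add: exps_def)
  ultimately show "a j = 0" by simp
qed

lemma le_funD: "(a::nat\<Rightarrow>nat) \<le> m \<Longrightarrow> a j \<le> m j" by (simp add: le_fun_def)
lemma le_funI: "(\<And>j. (a::nat\<Rightarrow>nat) j \<le> m j) \<Longrightarrow> a \<le> m" by (simp add: le_fun_def)

lemma diff_cancel_fun: "(a::nat\<Rightarrow>nat) \<le> m \<Longrightarrow> (\<lambda>j. m j - (m j - a j)) = a"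
proof (rule ext)
  fix j assume "a \<le> m" thus "m j - (m j - a j) = a j" using le_funD[of a m j] by simp
qed

lemma diff_le_fun: "(\<lambda>j. m j - a j) \<le> (m::nat\<Rightarrow>nat)" by (rule le_funI) simp

lemma exps_diff: "m \<in> exps d \<Longrightarrow> (\<lambda>j. m j - a j) \<in> exps d"
  by (rule le_exps[OF diff_le_fun])

lemma fin_le: assumes "m \<in> exps d" shows "finite {a::nat\<Rightarrow>nat. a \<le> m}"
proof -
  have "{a. a \<le> m} \<subseteq> (\<lambda>f j. if j < d then f j else 0) ` (PiE {..<d} (\<lambda>j. {0..m j}))"
  proof
    fix a assume "a \<in> {a. a \<le> m}"
    hence a: "a \<le> m" by simp
    hence ae: "a \<in> exps d" using le_exps assms by blast
    have "a = (\<lambda>j. if j < d then restrict a {..<d} j else 0)"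
    proof (rule ext)
      fix j show "a j = (if j < d then restrict a {..<d} j else 0)"
        using ae by (simp add: exps_def)
    qed
    moreover have "restrict a {..<d} \<in> PiE {..<d} (\<lambda>j. {0..m j})"
      using le_funD[OF a] by (simp add: PiE_iff)
    ultimately show "a \<in> (\<lambda>f j. if j < d then f j else 0) ` (PiE {..<d} (\<lambda>j. {0..m j}))"
      by (rule image_eqI)
  qed
  moreover have "finite (PiE {..<d} (\<lambda>j. {0..m j}))" by (rule finite_PiE) auto
  ultimately show ?thesis using finite_subset by blast
qed

lemma mul_comm: "mul d f g = mul d g f"
proof (rule ext)
  fix m
  show "mul d f g m = mul d g f m"
  proof (cases "m \<in> exps d")
    case True
    have "(\<Sum>a\<in>{a. a \<le> m}. f a * g (\<lambda>j. m j - a j)) = (\<Sum>a\<in>{a. a \<le> m}. g a * f (\<lambda>j. m j - a j))"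
    proof (rule sum.reindex_bij_witness[where i="\<lambda>a j. m j - a j" and j="\<lambda>a j. m j - a j"])
      fix a assume "a \<in> {a. a \<le> m}"
      hence a: "a \<le> m" by simp
      show "(\<lambda>j. m j - (m j - a j)) = a" using a by (rule diff_cancel_fun)
      show "(\<lambda>j. m j - a j) \<in> {a. a \<le> m}" using diff_le_fun by simp
      show "g (\<lambda>j. m j - a j) * f (\<lambda>j. m j - (m j - a j)) = f a * g (\<lambda>j. m j - a j)"
        using diff_cancel_fun[OF a] by (simp add: mult.commute)
    next
      fix a assume "a \<in> {a. a \<le> m}"
      hence a: "a \<le> m" by simp
      show "(\<lambda>j. m j - (m j - a j)) = a" using a by (rule diff_cancel_fun)
      show "(\<lambda>j. m j - a j) \<in> {a. a \<le> m}" using diff_le_fun by simp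
    qed
    thus ?thesis using True unfolding mul_def by simp
  next
    case False thus ?thesis unfolding mul_def by simp
  qed
qed

lemma le_fun_trans: "(a::nat\<Rightarrow>nat) \<le> b \<Longrightarrow> b \<le> c \<Longrightarrow> a \<le> c" by (rule order_trans)

lemma mul_assoc: "mul d (mul d f g) h = mul d f (mul d g h)"
proof (rule ext)
  fix m
  show "mul d (mul d f g) h m = mul d f (mul d g h) m"
  proof (cases "m \<in> exps d")
    case False thus ?thesis unfolding mul_def by simp
  next
    case True
    define A where "A = {a::nat\<Rightarrow>nat. a \<le> m}"
    have finA: "finite A" unfolding A_def using fin_le[OF True] .
    have "mul d (mul d f g) h m = (\<Sum>a\<in>A. mul d f g a * h (\<lambda>j. m j - a j))"
      using True unfolding mul_def A_def by simp
    also have "\<dots> = (\<Sum>a\<in>A. \<Sum>b\<in>{b. b \<in> A \<and> b \<le> a}. f b * g (\<lambda>j. a j - b j) * h (\<lambda>j. m j - a j))"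
    proof (rule sum.cong[OF refl])
      fix a assume "a \<in> A"
      hence am: "a \<le> m" unfolding A_def by simp
      hence ae: "a \<in> exps d" using le_exps True by blast
      have eqs: "{b. b \<in> A \<and> b \<le> a} = {b. b \<le> a}" unfolding A_def using am le_fun_trans by blast
      show "mul d f g a * h (\<lambda>j. m j - a j) = (\<Sum>b\<in>{b. b \<in> A \<and> b \<le> a}. f b * g (\<lambda>j. a j - b j) * h (\<lambda>j. m j - a j))"
        unfolding eqs using ae unfolding mul_def by (simp add: sum_distrib_right)
    qed
    also have "\<dots> = (\<Sum>b\<in>A. \<Sum>a\<in>{a. a \<in> A \<and> b \<le> a}. f b * g (\<lambda>j. a j - b j) * h (\<lambda>j. m j - a j))"
      by (rule sum.swap_restrict[OF finA finA])
    also have "\<dots> = (\<Sum>b\<in>A. f b * mul d g h (\<lambda>j. m j - b j))"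
    proof (rule sum.cong[OF refl])
      fix b assume "b \<in> A"
      hence bm: "b \<le> m" unfolding A_def by simp
      have mbe: "(\<lambda>j. m j - b j) \<in> exps d" using exps_diff[OF True] .
      have "(\<Sum>a\<in>{a. a \<in> A \<and> b \<le> a}. f b * g (\<lambda>j. a j - b j) * h (\<lambda>j. m j - a j))
          = (\<Sum>c\<in>{c. c \<le> (\<lambda>j. m j - b j)}. f b * (g c * h (\<lambda>j. (m j - b j) - c j)))"
      proof (rule sum.reindex_bij_witness[where i="\<lambda>c j. b j + c j" and j="\<lambda>a j. a j - b j"])
        fix a assume "a \<in> {a. a \<in> A \<and> b \<le> a}"
        hence am: "a \<le> m" and ba: "b \<le> a" unfolding A_def by auto
        show "(\<lambda>j. b j + (a j - b j)) = a"
        proof (rule ext)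
          fix j show "b j + (a j - b j) = a j" using le_funD[OF ba, of j] by simp
        qed
        show "(\<lambda>j. a j - b j) \<in> {c. c \<le> (\<lambda>j. m j - b j)}"
          using le_funD[OF am] by (simp add: le_funI diff_le_mono)
        have "(\<lambda>j. (m j - b j) - (a j - b j)) = (\<lambda>j. m j - a j)"
        proof (rule ext)
          fix j show "(m j - b j) - (a j - b j) = m j - a j" using le_funD[OF ba, of j] le_funD[OF am, of j] by simp
        qed
        thus "f b * (g (\<lambda>j. a j - b j) * h (\<lambda>j. (m j - b j) - (a j - b j))) = f b * g (\<lambda>j. a j - b j) * h (\<lambda>j. m j - a j)"
          by (simp add: mult.assoc)
      next
        fix c assume "c \<in> {c. c \<le> (\<lambda>j. m j - b j)}"
        hence cm: "\<And>j. c j \<le> m j - b j" using le_funD by auto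
        show "(\<lambda>j. b j + c j - b j) = c" by simp
        show "(\<lambda>j. b j + c j) \<in> {a. a \<in> A \<and> b \<le> a}"
          unfolding A_def using cm le_funD[OF bm] by (auto intro!: le_funI simp: add.commute le_diff_conv2)
      qed
      also have "\<dots> = f b * mul d g h (\<lambda>j. m j - b j)"
        using mbe unfolding mul_def by (simp add: sum_distrib_left)
      finally show "(\<Sum>a\<in>{a. a \<in> A \<and> b \<le> a}. f b * g (\<lambda>j. a j - b j) * h (\<lambda>j. m j - a j)) = f b * mul d g h (\<lambda>j. m j - b j)" .
    qed
    also have "\<dots> = mul d f (mul d g h) m"
      using True unfolding mul_def A_def by simp
    finally show ?thesis .
  qed
qed

definition one_ps :: "('k::field) mps" where "one_ps = (\<lambda>a. if a = (\<lambda>_. 0) then 1 else 0)"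

lemma mul_one: assumes "\<forall>a. a \<notin> exps d \<longrightarrow> f a = 0" shows "mul d one_ps f = f"
proof (rule ext)
  fix m
  show "mul d one_ps f m = f m"
  proof (cases "m \<in> exps d")
    case False thus ?thesis using assms unfolding mul_def by simp
  next
    case True
    have "(\<Sum>a\<in>{a. a \<le> m}. one_ps a * f (\<lambda>j. m j - a j)) = (\<Sum>a\<in>{a. a \<le> m}. if a = (\<lambda>_. 0) then f m else 0)"
      by (rule sum.cong[OF refl]) (simp add: one_ps_def)
    also have "\<dots> = f m" using fin_le[OF True] by (simp add: sum.delta' le_funI)
    finally show ?thesis using True unfolding mul_def by simp
  qed
qed

lemma mul_distr: "mul d (\<lambda>a. f a + g a) h = (\<lambda>a. mul d f h a + mul d g h a)"
  unfolding mul_def by (rule ext) (simp add: sum.distrib distrib_right)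

lemma mdeg_add: "mdeg d (\<lambda>j. a j + b j) = mdeg d a + mdeg d b"
  unfolding mdeg_def by (simp add: sum.distrib)

lemma mdeg_diff: "(a::nat\<Rightarrow>nat) \<le> m \<Longrightarrow> mdeg d m = mdeg d a + mdeg d (\<lambda>j. m j - a j)"
proof -
  assume am: "a \<le> m"
  have "(\<lambda>j. a j + (m j - a j)) = m" using le_funD[OF am] by (intro ext) simp
  thus ?thesis using mdeg_add[of d a "\<lambda>j. m j - a j"] by simp
qed

lemma mul_nonzero: assumes "mul d f g m \<noteq> 0"
  shows "m \<in> exps d \<and> (\<exists>a. a \<le> m \<and> f a \<noteq> 0 \<and> g (\<lambda>j. m j - a j) \<noteq> 0)"
proof -
  have me: "m \<in> exps d" using assms unfolding mul_def by (cases "m \<in> exps d") auto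
  hence "(\<Sum>a\<in>{a. a \<le> m}. f a * g (\<lambda>j. m j - a j)) \<noteq> 0" using assms unfolding mul_def by simp
  then obtain a where "a \<in> {a. a \<le> m}" "f a * g (\<lambda>j. m j - a j) \<noteq> 0"
    by (meson sum.neutral)
  thus ?thesis using me by auto
qed

definition Vset :: "nat \<Rightarrow> nat \<Rightarrow> ('k::field) mps set" where
  "Vset d n = {f. (\<forall>a. a \<notin> exps d \<longrightarrow> f a = 0) \<and> (\<forall>a. f a \<noteq> 0 \<longrightarrow> n dvd mdeg d a)}"

lemma V_carrier: "carrier (Veronese d n) = Vset d n"
  unfolding Veronese_def Vset_def by (simp add: PS_carrier)
lemma V_mult: "Group.monoid.mult (Veronese d n) = mul d" unfolding Veronese_def by (simp add: PS_mult)
lemma V_add: "Ring.ring.add (Veronese d n) = (\<lambda>f g a. f a + g a)" unfolding Veronese_def by (simp add: PS_add)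
lemma V_zero: "Ring.ring.zero (Veronese d n) = (\<lambda>_. 0)" unfolding Veronese_def by (simp add: PS_zero)
lemma V_one: "Group.monoid.one (Veronese d n) = one_ps" unfolding Veronese_def by (simp add: PS_one one_ps_def[abs_def])

lemma mul_closed: assumes "f \<in> Vset d n" "g \<in> Vset d n" shows "mul d f g \<in> Vset d n"
  unfolding Vset_def
proof (intro CollectI conjI allI impI)
  fix m assume "m \<notin> exps d" thus "mul d f g m = 0" unfolding mul_def by simp
next
  fix m assume "mul d f g m \<noteq> 0"
  then obtain a where me: "m \<in> exps d" and am: "a \<le> m" and fa: "f a \<noteq> 0" and ga: "g (\<lambda>j. m j - a j) \<noteq> 0"
    using mul_nonzero by blast
  have "n dvd mdeg d a" using fa assms(1) unfolding Vset_def by blast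
  moreover have "n dvd mdeg d (\<lambda>j. m j - a j)" using ga assms(2) unfolding Vset_def by blast
  ultimately show "n dvd mdeg d m" using mdeg_diff[OF am] by simp
qed

lemma cring_V: "cring (Veronese d n :: ('k::field) mps ring)"
proof (rule cringI)
  show "abelian_group (Veronese d n :: 'k mps ring)"
  proof (rule abelian_groupI, unfold V_carrier V_add V_zero)
    fix x y :: "'k mps" assume "x \<in> Vset d n" "y \<in> Vset d n"
    thus "(\<lambda>a. x a + y a) \<in> Vset d n" unfolding Vset_def
    proof (intro CollectI conjI allI impI, goal_cases)
      case (1 a) thus ?case by simp
    next
      case (2 a)
      hence "x a \<noteq> 0 \<or> y a \<noteq> 0" by auto
      thus ?case using 2 by blast
    qed
  next
    show "(\<lambda>_. 0::'k) \<in> Vset d n" unfolding Vset_def by simp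
  next
    fix x y z :: "'k mps"
    show "(\<lambda>a. (\<lambda>a. x a + y a) a + z a) = (\<lambda>a. x a + (\<lambda>a. y a + z a) a)" by (simp add: add.assoc)
    show "(\<lambda>a. x a + y a) = (\<lambda>a. y a + x a)" by (simp add: add.commute)
    show "(\<lambda>a. 0 + x a) = x" by simp
  next
    fix x :: "'k mps" assume "x \<in> Vset d n"
    hence "(\<lambda>a. - x a) \<in> Vset d n" unfolding Vset_def by simp
    moreover have "(\<lambda>a. (\<lambda>a. - x a) a + x a) = (\<lambda>_. 0)" by simp
    ultimately show "\<exists>y\<in>Vset d n. (\<lambda>a. y a + x a) = (\<lambda>_. 0)" by (intro bexI[of _ "\<lambda>a. - x a"]) simp_all
  qed
next
  show "comm_monoid (Veronese d n :: 'k mps ring)"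
  proof (rule comm_monoidI, unfold V_carrier V_mult V_one)
    fix x y :: "'k mps" assume "x \<in> Vset d n" "y \<in> Vset d n"
    thus "mul d x y \<in> Vset d n" by (rule mul_closed)
  next
    show "(one_ps::'k mps) \<in> Vset d n" unfolding Vset_def one_ps_def exps_def mdeg_def by auto
  next
    fix x y z :: "'k mps"
    show "mul d (mul d x y) z = mul d x (mul d y z)" by (rule mul_assoc)
    show "mul d x y = mul d y x" by (rule mul_comm)
  next
    fix x :: "'k mps" assume "x \<in> Vset d n"
    thus "mul d one_ps x = x" unfolding Vset_def using mul_one by blast
  qed
next
  fix x y z :: "'k mps"
  show "(x \<oplus>\<^bsub>Veronese d n\<^esub> y) \<otimes>\<^bsub>Veronese d n\<^esub> z = x \<otimes>\<^bsub>Veronese d n\<^esub> z \<oplus>\<^bsub>Veronese d n\<^esub> y \<otimes>\<^bsub>Veronese d n\<^esub> z"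
    unfolding V_mult V_add by (rule mul_distr)
qed


definition mon :: "(nat \<Rightarrow> nat) \<Rightarrow> ('k::field) mps" where
  "mon c = (\<lambda>a. if a = c then 1 else 0)"

lemma one_ps_mon: "one_ps = mon (\<lambda>_. 0)" unfolding one_ps_def mon_def by simp

lemma mul_mon: assumes "c \<in> exps d"
  shows "mul d (mon c) f m = (if m \<in> exps d \<and> c \<le> m then f (\<lambda>j. m j - c j) else 0)"
proof (cases "m \<in> exps d")
  case False thus ?thesis unfolding mul_def by simp
next
  case True
  have "(\<Sum>a\<in>{a. a \<le> m}. mon c a * f (\<lambda>j. m j - a j)) = (\<Sum>a\<in>{a. a \<le> m}. if c = a then f (\<lambda>j. m j - c j) else 0)"
    by (rule sum.cong[OF refl]) (auto simp: mon_def)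
  also have "\<dots> = (if c \<le> m then f (\<lambda>j. m j - c j) else 0)" using fin_le[OF True] by (simp add: sum.delta)
  finally show ?thesis using True unfolding mul_def by simp
qed

lemma add_exps: "a \<in> exps d \<Longrightarrow> b \<in> exps d \<Longrightarrow> (\<lambda>j. a j + b j) \<in> exps d"
  unfolding exps_def by simp

lemma mon_mon: assumes "a \<in> exps d" "b \<in> exps d"
  shows "mul d (mon a) (mon b) = (mon (\<lambda>j. a j + b j) :: ('k::field) mps)"
proof (rule ext)
  fix m
  have "(m \<in> exps d \<and> a \<le> m \<and> (\<lambda>j. m j - a j) = b) = (m = (\<lambda>j. a j + b j))"
  proof
    assume h: "m \<in> exps d \<and> a \<le> m \<and> (\<lambda>j. m j - a j) = b"
    show "m = (\<lambda>j. a j + b j)"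
    proof (rule ext)
      fix j have "m j - a j = b j" using h by metis
      thus "m j = a j + b j" using le_funD[of a m j] h by simp
    qed
  next
    assume h: "m = (\<lambda>j. a j + b j)"
    show "m \<in> exps d \<and> a \<le> m \<and> (\<lambda>j. m j - a j) = b"
      using h add_exps[OF assms] by (auto intro: le_funI)
  qed
  thus "mul d (mon a) (mon b) m = (mon (\<lambda>j. a j + b j) :: ('k::field) mps) m"
    unfolding mul_mon[OF assms(1)] by (auto simp: mon_def)
qed

definition shift :: "nat \<Rightarrow> (nat \<Rightarrow> nat) \<Rightarrow> ('k::field) mps \<Rightarrow> 'k mps" where
  "shift d c f = (\<lambda>m. if m \<in> exps d then f (\<lambda>j. m j + c j) else 0)"

lemma shift_mul: assumes "c \<in> exps d" "\<forall>a. a \<notin> exps d \<longrightarrow> f a = 0" "\<forall>a. f a \<noteq> 0 \<longrightarrow> c \<le> a"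
  shows "mul d (mon c) (shift d c f) = f"
proof (rule ext)
  fix m
  show "mul d (mon c) (shift d c f) m = f m"
  proof (cases "m \<in> exps d \<and> c \<le> m")
    case True
    have e: "(\<lambda>j. m j - c j + c j) = m" using le_funD[of c m] True by (intro ext) simp
    show ?thesis unfolding mul_mon[OF assms(1)] shift_def using True exps_diff[of m d c] e by simp
  next
    case False
    hence "f m = 0" using assms(2,3) by blast
    thus ?thesis unfolding mul_mon[OF assms(1)] using False by (simp only: if_False simp_thms)
  qed
qed

definition Q :: "nat \<Rightarrow> nat \<Rightarrow> nat \<Rightarrow> ('k::field) mps set" where
  "Q d n i = {f \<in> Vset d n. \<forall>a. f a \<noteq> 0 \<longrightarrow> i \<le> a 0}"

definition e0 :: "nat \<Rightarrow> nat" where "e0 = (\<lambda>j. if j = 0 then 1 else 0)"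
definition e1 :: "nat \<Rightarrow> nat" where "e1 = (\<lambda>j. if j = 1 then 1 else 0)"
definition smul :: "nat \<Rightarrow> (nat \<Rightarrow> nat) \<Rightarrow> nat \<Rightarrow> nat" where "smul k a = (\<lambda>j. k * a j)"

lemma e0_exps: "1 \<le> d \<Longrightarrow> e0 \<in> exps d" unfolding e0_def exps_def by simp
lemma e1_exps: "2 \<le> d \<Longrightarrow> e1 \<in> exps d" unfolding e1_def exps_def by simp
lemma smul_exps: "a \<in> exps d \<Longrightarrow> smul k a \<in> exps d" unfolding smul_def exps_def by simp

lemma var1_mon: "var1 = mon e0" unfolding var1_def mon_def e0_def by simp

lemma mon_shift_V: assumes "c \<in> exps d" "\<forall>a. a \<notin> exps d \<longrightarrow> g a = 0"
   "\<forall>a. g a \<noteq> 0 \<longrightarrow> n dvd mdeg d a + mdeg d c"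
  shows "mul d (mon c) g \<in> Vset d n"
  unfolding Vset_def
proof (intro CollectI conjI allI impI)
  fix m assume "m \<notin> exps d" thus "mul d (mon c) g m = 0" unfolding mul_def by simp
next
  fix m assume h: "mul d (mon c) g m \<noteq> 0"
  hence "m \<in> exps d \<and> c \<le> m" and g: "g (\<lambda>j. m j - c j) \<noteq> 0" unfolding mul_mon[OF assms(1)]
    by (auto split: if_splits)
  thus "n dvd mdeg d m" using assms(3) mdeg_diff[of c m d] g by (metis add.commute)
qed

lemma L_eq: assumes "1 \<le> d" shows "Lideal d n = (Q d n 1 :: ('k::field) mps set)"
proof
  show "Lideal d n \<subseteq> (Q d n 1 :: 'k mps set)"
  proof
    fix f :: "'k mps" assume "f \<in> Lideal d n"
    then obtain s where f: "f = mul d (mon e0) s" and fV: "f \<in> Vset d n"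
      unfolding Lideal_def V_carrier PS_mult var1_mon by blast
    have "\<forall>a. f a \<noteq> 0 \<longrightarrow> 1 \<le> a 0"
    proof (intro allI impI)
      fix a assume "f a \<noteq> 0"
      hence "e0 \<le> a" unfolding f mul_mon[OF e0_exps[OF assms]] by (auto split: if_splits)
      thus "1 \<le> a 0" using le_funD[of e0 a 0] by (simp add: e0_def)
    qed
    thus "f \<in> Q d n 1" using fV unfolding Q_def by blast
  qed
next
  show "(Q d n 1 :: 'k mps set) \<subseteq> Lideal d n"
  proof
    fix f :: "'k mps" assume f: "f \<in> Q d n 1"
    hence fc: "\<forall>a. a \<notin> exps d \<longrightarrow> f a = 0" and fV: "f \<in> Vset d n" unfolding Q_def Vset_def by auto
    have "\<forall>a. f a \<noteq> 0 \<longrightarrow> e0 \<le> a"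
    proof (intro allI impI)
      fix a assume "f a \<noteq> 0"
      hence "1 \<le> a 0" using f unfolding Q_def by blast
      thus "e0 \<le> a" by (intro le_funI) (simp add: e0_def)
    qed
    hence "f = mul d (mon e0) (shift d e0 f)" using shift_mul[OF e0_exps[OF assms] fc] by simp
    moreover have "shift d e0 f \<in> carrier (PS d)" unfolding PS_carrier shift_def by simp
    ultimately show "f \<in> Lideal d n" unfolding Lideal_def V_carrier PS_mult var1_mon using fV by blast
  qed
qed


lemma Q_mul: assumes "a \<in> Q d n k" "b \<in> Q d n l" shows "mul d a b \<in> Q d n (k + l)"
  unfolding Q_def
proof (intro CollectI conjI allI impI)
  show "mul d a b \<in> Vset d n" using assms mul_closed unfolding Q_def by blast
next
  fix m assume "mul d a b m \<noteq> 0"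
  then obtain c where cm: "c \<le> m" and ac: "a c \<noteq> 0" and bc: "b (\<lambda>j. m j - c j) \<noteq> 0"
    using mul_nonzero by blast
  have "k \<le> c 0" using ac assms(1) unfolding Q_def by blast
  moreover have "l \<le> m 0 - c 0" using bc assms(2) unfolding Q_def by fastforce
  ultimately show "k + l \<le> m 0" using le_funD[OF cm, of 0] by simp
qed

lemma Q_add: assumes "a \<in> Q d n k" "b \<in> Q d n k" shows "(\<lambda>x. a x + b x) \<in> Q d n k"
  unfolding Q_def Vset_def
proof (intro CollectI conjI allI impI)
  fix x assume "x \<notin> exps d" thus "a x + b x = 0" using assms unfolding Q_def Vset_def by simp
next
  fix x assume "a x + b x \<noteq> 0" hence "a x \<noteq> 0 \<or> b x \<noteq> 0" by auto
  thus "n dvd mdeg d x" using assms unfolding Q_def Vset_def by blast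
next
  fix x assume "a x + b x \<noteq> 0" hence "a x \<noteq> 0 \<or> b x \<noteq> 0" by auto
  thus "k \<le> x 0" using assms unfolding Q_def Vset_def by blast
qed

lemma Q0: "Q d n 0 = Vset d n" unfolding Q_def by simp

lemma pow_sub_Q: assumes "1 \<le> d" shows "ideal_pow (Veronese d n) (Lideal d n) k \<subseteq> (Q d n k :: ('k::field) mps set)"
proof (induction k)
  case 0 thus ?case by (simp add: ideal_pow_def V_carrier Q0)
next
  case (Suc k)
  have "x \<in> (Q d n (Suc k) :: 'k mps set)" if "x \<in> ideal_prod (Veronese d n) (ideal_pow (Veronese d n) (Lideal d n) k) (Lideal d n)" for x
    using that
  proof (induction rule: ideal_prod.induct)
    case (prod i j)
    thus ?case using Q_mul[of i d n k j 1] Suc L_eq[OF assms] unfolding V_mult by auto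
  next
    case (sum s1 s2) thus ?case using Q_add unfolding V_add by blast
  qed
  thus ?case by (simp add: ideal_pow_def subset_iff)
qed


definition lexless :: "nat \<Rightarrow> (nat \<Rightarrow> nat) \<Rightarrow> (nat \<Rightarrow> nat) \<Rightarrow> bool" where
  "lexless d a b = (\<exists>k<d. (\<forall>j<k. a j = b j) \<and> a k < b k)"

lemma lexless_irrefl: "\<not> lexless d a a" unfolding lexless_def by simp

lemma lexless_trans: assumes "lexless d a b" "lexless d b c" shows "lexless d a c"
proof -
  obtain k1 where k1: "k1 < d" "\<And>j. j<k1 \<Longrightarrow> a j = b j" "a k1 < b k1" using assms(1) unfolding lexless_def by blast
  obtain k2 where k2: "k2 < d" "\<And>j. j<k2 \<Longrightarrow> b j = c j" "b k2 < c k2" using assms(2) unfolding lexless_def by blast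
  define k where "k = min k1 k2"
  have "k < d" unfolding k_def using k1(1) by simp
  moreover have "\<forall>j<k. a j = c j"
  proof (intro allI impI)
    fix j assume "j < k" thus "a j = c j" using k1(2)[of j] k2(2)[of j] unfolding k_def by simp
  qed
  moreover have "a k < c k"
  proof (cases "k1 < k2")
    case True thus ?thesis using k1(3) k2(2)[of k1] unfolding k_def by simp
  next
    case False
    show ?thesis
    proof (cases "k1 = k2")
      case True thus ?thesis using k1(3) k2(3) unfolding k_def by simp
    next
      case False
      hence "k2 < k1" using \<open>\<not> k1 < k2\<close> by simp
      thus ?thesis using k2(3) k1(2)[of k2] unfolding k_def by simp
    qed
  qed
  ultimately show ?thesis unfolding lexless_def by blast
qed

lemma lexless_total: assumes "a \<in> exps d" "b \<in> exps d" "a \<noteq> b" shows "lexless d a b \<or> lexless d b a"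
proof -
  obtain j0 where "a j0 \<noteq> b j0" using assms(3) by blast
  define k where "k = (LEAST j. a j \<noteq> b j)"
  have k: "a k \<noteq> b k" unfolding k_def by (rule LeastI[of _ j0]) fact
  have kl: "\<forall>j<k. a j = b j" unfolding k_def using not_less_Least by blast
  have "k < d"
  proof (rule ccontr)
    assume "\<not> k < d" thus False using assms(1,2) k unfolding exps_def by simp
  qed
  have kl': "\<forall>j<k. b j = a j" using kl by simp
  show ?thesis
  proof (cases "a k < b k")
    case True thus ?thesis unfolding lexless_def using \<open>k < d\<close> kl by blast
  next
    case False hence "b k < a k" using k by simp
    thus ?thesis unfolding lexless_def using \<open>k < d\<close> kl' by blast
  qed
qed

lemma lexless_add: "lexless d a b \<Longrightarrow> lexless d (\<lambda>j. a j + c j) (\<lambda>j. b j + c j)"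
  unfolding lexless_def by auto

lemma lex_min: assumes "finite M" "M \<noteq> {}" "M \<subseteq> exps d"
  shows "\<exists>m\<in>M. \<forall>a\<in>M. a \<noteq> m \<longrightarrow> lexless d m a"
  using assms
proof (induction M rule: finite_ne_induct)
  case (singleton x) thus ?case by simp
next
  case (insert x F)
  have Fe: "F \<subseteq> exps d" and xe: "x \<in> exps d" using insert.prems by auto
  obtain m where m: "m \<in> F" "\<And>a. a\<in>F \<Longrightarrow> a \<noteq> m \<Longrightarrow> lexless d m a" using insert.IH[OF Fe] by blast
  have xm: "x \<noteq> m" using m(1) insert.hyps(3) by blast
  have me: "m \<in> exps d" using m(1) Fe by blast
  show ?case
  proof (cases "lexless d x m")
    case True
    have "\<forall>a\<in>insert x F. a \<noteq> x \<longrightarrow> lexless d x a"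
    proof (intro ballI impI)
      fix a assume "a \<in> insert x F" "a \<noteq> x"
      hence aF: "a \<in> F" by simp
      show "lexless d x a"
      proof (cases "a = m")
        case True thus ?thesis using \<open>lexless d x m\<close> by simp
      next
        case False thus ?thesis using m(2)[OF aF] \<open>lexless d x m\<close> lexless_trans by blast
      qed
    qed
    thus ?thesis by blast
  next
    case False
    hence mx: "lexless d m x" using lexless_total[OF xe me xm] by simp
    have "\<forall>a\<in>insert x F. a \<noteq> m \<longrightarrow> lexless d m a"
    proof (intro ballI impI)
      fix a assume "a \<in> insert x F" "a \<noteq> m"
      thus "lexless d m a" using mx m(2) by (cases "a = x") auto
    qed
    thus ?thesis using m(1) by blast
  qed
qed

lemma fin_deg: "finite {a \<in> exps d. mdeg d a = D}"
proof -
  have "{a \<in> exps d. mdeg d a = D} \<subseteq> {a. a \<le> (\<lambda>j. if j < d then D else 0)}"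
  proof
    fix a assume h: "a \<in> {a \<in> exps d. mdeg d a = D}"
    show "a \<in> {a. a \<le> (\<lambda>j. if j < d then D else 0)}"
    proof (intro CollectI le_funI)
      fix j show "a j \<le> (if j < d then D else 0)"
      proof (cases "j < d")
        case True
        have "a j \<le> (\<Sum>j<d. a j)" using True by (intro member_le_sum) auto
        thus ?thesis using h True unfolding mdeg_def by simp
      next
        case False thus ?thesis using h unfolding exps_def by simp
      qed
    qed
  qed
  moreover have "finite {a. a \<le> (\<lambda>j. if j < d then D else (0::nat))}" by (rule fin_le[of _ d]) (simp add: exps_def)
  ultimately show ?thesis by (rule finite_subset)
qed

lemma supp_min: assumes "\<forall>a. a \<notin> exps d \<longrightarrow> f a = 0" "f \<noteq> (\<lambda>_. 0)"
  shows "\<exists>m D. f m \<noteq> 0 \<and> mdeg d m = D \<and> (\<forall>a. f a \<noteq> 0 \<longrightarrow> D \<le> mdeg d a) \<and>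
          (\<forall>a. f a \<noteq> 0 \<longrightarrow> mdeg d a = D \<longrightarrow> a \<noteq> m \<longrightarrow> lexless d m a)"
proof -
  obtain a0 where a0: "f a0 \<noteq> 0" using assms(2) by auto
  define D where "D = (LEAST D. \<exists>a. f a \<noteq> 0 \<and> mdeg d a = D)"
  have "\<exists>a. f a \<noteq> 0 \<and> mdeg d a = D" unfolding D_def by (rule LeastI[of _ "mdeg d a0"]) (use a0 in blast)
  have Dle: "\<forall>a. f a \<noteq> 0 \<longrightarrow> D \<le> mdeg d a" unfolding D_def by (blast intro: Least_le)
  define M where "M = {a. f a \<noteq> 0 \<and> mdeg d a = D}"
  have Msub: "M \<subseteq> {a \<in> exps d. mdeg d a = D}" unfolding M_def using assms(1) by blast
  have "finite M" using fin_deg Msub finite_subset by blast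
  moreover have "M \<noteq> {}" unfolding M_def using \<open>\<exists>a. f a \<noteq> 0 \<and> mdeg d a = D\<close> by blast
  moreover have "M \<subseteq> exps d" using Msub by blast
  ultimately obtain m where "m \<in> M" "\<forall>a\<in>M. a \<noteq> m \<longrightarrow> lexless d m a" using lex_min by blast
  thus ?thesis using Dle unfolding M_def by blast
qed

lemma domain_mul: assumes "\<forall>a. a \<notin> exps d \<longrightarrow> f a = 0" "f \<noteq> (\<lambda>_. 0)"
  "\<forall>a. a \<notin> exps d \<longrightarrow> g a = 0" "g \<noteq> (\<lambda>_. 0)"
  shows "mul d f g \<noteq> (\<lambda>_. (0::'k::field))"
proof -
  obtain ma Da where A: "f ma \<noteq> 0" "mdeg d ma = Da" "\<forall>a. f a \<noteq> 0 \<longrightarrow> Da \<le> mdeg d a"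
     "\<forall>a. f a \<noteq> 0 \<longrightarrow> mdeg d a = Da \<longrightarrow> a \<noteq> ma \<longrightarrow> lexless d ma a"
    using supp_min[OF assms(1,2)] by blast
  obtain mb Db where B: "g mb \<noteq> 0" "mdeg d mb = Db" "\<forall>a. g a \<noteq> 0 \<longrightarrow> Db \<le> mdeg d a"
     "\<forall>a. g a \<noteq> 0 \<longrightarrow> mdeg d a = Db \<longrightarrow> a \<noteq> mb \<longrightarrow> lexless d mb a"
    using supp_min[OF assms(3,4)] by blast
  define m where "m = (\<lambda>j. ma j + mb j)"
  have mae: "ma \<in> exps d" using A(1) assms(1) by blast
  have mbe: "mb \<in> exps d" using B(1) assms(3) by blast
  have me: "m \<in> exps d" unfolding m_def using add_exps[OF mae mbe] .
  have mam: "ma \<le> m" unfolding m_def by (intro le_funI) simp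
  have mmb: "(\<lambda>j. m j - ma j) = mb" unfolding m_def by simp
  have degm: "mdeg d m = Da + Db" unfolding m_def using mdeg_add A(2) B(2) by simp
  have "(\<Sum>a\<in>{a. a \<le> m}. f a * g (\<lambda>j. m j - a j)) = (\<Sum>a\<in>{a. a \<le> m}. if ma = a then f ma * g mb else 0)"
  proof (rule sum.cong[OF refl])
    fix a assume "a \<in> {a. a \<le> m}"
    hence am: "a \<le> m" by simp
    show "f a * g (\<lambda>j. m j - a j) = (if ma = a then f ma * g mb else 0)"
    proof (cases "ma = a")
      case True thus ?thesis using mmb by simp
    next
      case False
      show ?thesis
      proof (rule ccontr)
        assume "f a * g (\<lambda>j. m j - a j) \<noteq> (if ma = a then f ma * g mb else 0)"
        hence fa: "f a \<noteq> 0" and gb: "g (\<lambda>j. m j - a j) \<noteq> 0" using False by auto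
        define b where "b = (\<lambda>j. m j - a j)"
        have dsum: "mdeg d m = mdeg d a + mdeg d b" unfolding b_def by (rule mdeg_diff[OF am])
        have "Da \<le> mdeg d a" using A(3) fa by blast
        moreover have "Db \<le> mdeg d b" using B(3) gb unfolding b_def by blast
        ultimately have da: "mdeg d a = Da" and db: "mdeg d b = Db" using dsum degm by linarith+
        have l1: "lexless d ma a" using A(4) fa da False by blast
        have ab: "(\<lambda>j. a j + b j) = m" unfolding b_def using le_funD[OF am] by (intro ext) simp
        have "b \<noteq> mb"
        proof
          assume "b = mb"
          have "a = ma"
          proof (rule ext)
            fix j have "a j + b j = ma j + mb j" using fun_cong[OF ab, of j] unfolding m_def by simp
            thus "a j = ma j" using \<open>b = mb\<close> by simp
          qed
          thus False using False by simp
        qed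
        hence l2: "lexless d mb b" using B(4) gb db unfolding b_def by blast
        have "lexless d (\<lambda>j. ma j + mb j) (\<lambda>j. a j + mb j)" using lexless_add[OF l1] .
        moreover have "lexless d (\<lambda>j. mb j + a j) (\<lambda>j. b j + a j)" using lexless_add[OF l2] .
        hence "lexless d (\<lambda>j. a j + mb j) (\<lambda>j. a j + b j)" by (simp add: add.commute)
        ultimately have "lexless d (\<lambda>j. ma j + mb j) (\<lambda>j. a j + b j)" by (rule lexless_trans)
        hence "lexless d m m" using ab unfolding m_def by simp
        thus False using lexless_irrefl by blast
      qed
    qed
  qed
  also have "\<dots> = f ma * g mb" using fin_le[OF me] mam by (simp add: sum.delta)
  finally have "mul d f g m = f ma * g mb" using me unfolding mul_def by simp
  hence "mul d f g m \<noteq> 0" using A(1) B(1) by simp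
  thus ?thesis by (auto dest: fun_cong[of _ _ m])
qed


lemma mdeg_e0: "1 \<le> d \<Longrightarrow> mdeg d e0 = 1" unfolding mdeg_def e0_def by (simp add: sum.delta)
lemma mdeg_e1: "2 \<le> d \<Longrightarrow> mdeg d e1 = 1" unfolding mdeg_def e1_def by (simp add: sum.delta)
lemma mdeg_smul: "mdeg d (smul k a) = k * mdeg d a" unfolding mdeg_def smul_def by (simp add: sum_distrib_left)

lemma mon_V: "c \<in> exps d \<Longrightarrow> n dvd mdeg d c \<Longrightarrow> (mon c :: ('k::field) mps) \<in> Vset d n"
  unfolding Vset_def mon_def by auto

lemma mon_PS: "c \<in> exps d \<Longrightarrow> \<forall>a. a \<notin> exps d \<longrightarrow> (mon c :: ('k::field) mps) a = 0"
  unfolding mon_def by auto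

definition wv :: "nat \<Rightarrow> nat \<Rightarrow> nat" where "wv n = (\<lambda>j. e0 j + (n - 1) * e1 j)"

lemma wv_exps: "2 \<le> d \<Longrightarrow> wv n \<in> exps d" unfolding wv_def e0_def e1_def exps_def by simp

lemma mdeg_wv: assumes "2 \<le> d" "1 \<le> n" shows "mdeg d (wv n) = n"
proof -
  have "mdeg d (wv n) = mdeg d e0 + mdeg d (smul (n-1) e1)" unfolding wv_def smul_def by (rule mdeg_add)
  thus ?thesis using mdeg_e0 mdeg_e1 mdeg_smul assms by simp
qed

lemma mon_wv_L: assumes "2 \<le> d" "1 \<le> n" shows "(mon (wv n) :: ('k::field) mps) \<in> Lideal d n"
proof -
  have we: "wv n \<in> exps d" using wv_exps[OF assms(1)] .
  have "(mon (wv n) :: 'k mps) \<in> Vset d n" by (rule mon_V[OF we]) (simp add: mdeg_wv[OF assms])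
  moreover have "wv n 0 = 1" unfolding wv_def e0_def e1_def by simp
  ultimately have "(mon (wv n) :: 'k mps) \<in> Q d n 1" unfolding Q_def mon_def by auto
  moreover have "1 \<le> d" using assms by simp
  ultimately show ?thesis using L_eq[of d n, where 'k='k] by simp
qed

lemma pow_mon: assumes "2 \<le> d" "1 \<le> n"
  shows "v \<in> Vset d n \<Longrightarrow> mul d (mon (smul k (wv n))) v \<in> ideal_pow (Veronese d n) (Lideal d n) k"
proof (induction k arbitrary: v)
  case 0
  have "smul 0 (wv n) = (\<lambda>_. 0)" unfolding smul_def by simp
  hence "mul d (mon (smul 0 (wv n))) v = v" using mul_one[of d v] 0 unfolding Vset_def one_ps_mon by simp
  thus ?case using 0 by (simp add: ideal_pow_def V_carrier)
next
  case (Suc k)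
  have we: "wv n \<in> exps d" using wv_exps[OF assms(1)] .
  have kwe: "smul k (wv n) \<in> exps d" using smul_exps[OF we] .
  have "mul d (mul d (mon (smul k (wv n))) v) (mon (wv n)) = mul d (mul d (mon (smul k (wv n))) (mon (wv n))) v"
    by (metis mul_assoc mul_comm)
  also have "\<dots> = mul d (mon (smul (Suc k) (wv n))) v"
  proof -
    have e: "(\<lambda>j. smul k (wv n) j + wv n j) = smul (Suc k) (wv n)" unfolding smul_def by (intro ext) simp
    show ?thesis by (simp only: mon_mon[OF kwe we] e)
  qed
  finally have eq: "mul d (mul d (mon (smul k (wv n))) v) (mon (wv n)) = mul d (mon (smul (Suc k) (wv n))) v" .
  have "mul d (mul d (mon (smul k (wv n))) v) (mon (wv n)) \<in> ideal_prod (Veronese d n) (ideal_pow (Veronese d n) (Lideal d n) k) (Lideal d n)"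
    using ideal_prod.prod[OF Suc.IH[OF Suc.prems] mon_wv_L[OF assms], of "Veronese d n"] unfolding V_mult .
  thus ?case using eq by (simp add: ideal_pow_def)
qed


definition proj :: "nat \<Rightarrow> ('k::field) mps \<Rightarrow> 'k mps" where
  "proj j f = (\<lambda>a. if a 0 = j then f a else 0)"

lemma proj_mul: assumes "\<forall>a. r a \<noteq> 0 \<longrightarrow> j \<le> a 0"
  shows "proj j (mul d s r) = mul d (proj 0 s) (proj j r)"
proof (rule ext)
  fix m
  show "proj j (mul d s r) m = mul d (proj 0 s) (proj j r) m"
  proof (cases "m \<in> exps d")
    case False thus ?thesis unfolding proj_def mul_def by simp
  next
    case True
    show ?thesis
    proof (cases "m 0 = j")
      case False
      have "(\<Sum>a\<in>{a. a \<le> m}. proj 0 s a * proj j r (\<lambda>i. m i - a i)) = 0"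
      proof (rule sum.neutral, intro ballI)
        fix a assume "a \<in> {a. a \<le> m}"
        show "proj 0 s a * proj j r (\<lambda>i. m i - a i) = 0"
          unfolding proj_def using False by auto
      qed
      moreover have "proj j (mul d s r) m = 0" using False by (simp add: proj_def)
      ultimately show ?thesis using True unfolding mul_def[of d "proj 0 s" "proj j r"] by simp
    next
      case mj: True
      have "(\<Sum>a\<in>{a. a \<le> m}. s a * r (\<lambda>i. m i - a i)) = (\<Sum>a\<in>{a. a \<le> m}. proj 0 s a * proj j r (\<lambda>i. m i - a i))"
      proof (rule sum.cong[OF refl])
        fix a assume "a \<in> {a. a \<le> m}"
        hence am: "a 0 \<le> m 0" using le_funD by auto
        show "s a * r (\<lambda>i. m i - a i) = proj 0 s a * proj j r (\<lambda>i. m i - a i)"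
        proof (cases "a 0 = 0")
          case True thus ?thesis unfolding proj_def using mj by simp
        next
          case False
          hence "m 0 - a 0 < j" using mj am by simp
          hence "r (\<lambda>i. m i - a i) = 0" using assms by fastforce
          thus ?thesis unfolding proj_def using False by simp
        qed
      qed
      moreover have "proj j (mul d s r) m = mul d s r m" using mj by (simp add: proj_def)
      ultimately show ?thesis using True unfolding mul_def by simp
    qed
  qed
qed

lemma Q_cancel: assumes "1 \<le> d" "r \<in> Vset d n" "s \<in> Vset d n" "s \<notin> Q d n 1" "mul d s r \<in> Q d n i"
  shows "r \<in> Q d n (i::nat)"
proof (rule ccontr)
  assume nr: "r \<notin> Q d n i"
  then obtain a0 where a0: "r a0 \<noteq> 0" "a0 0 < i" using assms(2) unfolding Q_def by force
  define j where "j = (LEAST j. \<exists>a. r a \<noteq> 0 \<and> a 0 = j)"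
  have "\<exists>a. r a \<noteq> 0 \<and> a 0 = j" unfolding j_def by (rule LeastI[of _ "a0 0"]) (use a0 in blast)
  then obtain aj where aj: "r aj \<noteq> 0" "aj 0 = j" by blast
  have jmin: "\<forall>a. r a \<noteq> 0 \<longrightarrow> j \<le> a 0" unfolding j_def by (blast intro: Least_le)
  have ji: "j < i" using jmin a0 by fastforce
  obtain b where b: "s b \<noteq> 0" "b 0 = 0" using assms(3,4) unfolding Q_def by force
  have rc: "\<forall>a. a \<notin> exps d \<longrightarrow> r a = 0" and sc: "\<forall>a. a \<notin> exps d \<longrightarrow> s a = 0"
    using assms(2,3) unfolding Vset_def by auto
  have "mul d (proj 0 s) (proj j r) \<noteq> (\<lambda>_. 0)"
  proof (rule domain_mul)
    show "\<forall>a. a \<notin> exps d \<longrightarrow> proj 0 s a = 0" using sc unfolding proj_def by simp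
    show "\<forall>a. a \<notin> exps d \<longrightarrow> proj j r a = 0" using rc unfolding proj_def by simp
    show "proj 0 s \<noteq> (\<lambda>_. 0)"
    proof
      assume "proj 0 s = (\<lambda>_. 0)" hence "proj 0 s b = 0" by simp
      thus False using b unfolding proj_def by simp
    qed
    show "proj j r \<noteq> (\<lambda>_. 0)"
    proof
      assume "proj j r = (\<lambda>_. 0)" hence "proj j r aj = 0" by simp
      thus False using aj unfolding proj_def by simp
    qed
  qed
  hence "proj j (mul d s r) \<noteq> (\<lambda>_. 0)" using proj_mul[OF jmin] by simp
  then obtain m where "proj j (mul d s r) m \<noteq> 0" by auto
  hence "mul d s r m \<noteq> 0" "m 0 = j" unfolding proj_def by (auto split: if_splits)
  thus False using assms(5) ji unfolding Q_def by fastforce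
qed

lemma symb_eq: assumes "2 \<le> d" "1 < n" "1 \<le> i"
  shows "symbolic_power (Veronese d n) (Lideal d n) i = (Q d n i :: ('k::field) mps set)"
proof
  have d1: "1 \<le> d" using assms by simp
  show "symbolic_power (Veronese d n) (Lideal d n) i \<subseteq> (Q d n i :: 'k mps set)"
  proof
    fix r :: "'k mps" assume "r \<in> symbolic_power (Veronese d n) (Lideal d n) i"
    then obtain s where r: "r \<in> Vset d n" and s: "s \<in> Vset d n" "s \<notin> Q d n 1"
      and sr: "mul d s r \<in> ideal_pow (Veronese d n) (Lideal d n) i"
      unfolding symbolic_power_def V_carrier V_mult L_eq[OF d1] by blast
    have "mul d s r \<in> Q d n i" using sr pow_sub_Q[OF d1] by blast
    thus "r \<in> Q d n i" using Q_cancel[OF d1 r s] by blast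
  qed
next
  show "(Q d n i :: 'k mps set) \<subseteq> symbolic_power (Veronese d n) (Lideal d n) i"
  proof
    fix r :: "'k mps" assume rQ: "r \<in> Q d n i"
    have d1: "1 \<le> d" and n1: "1 \<le> n" using assms by auto
    have rV: "r \<in> Vset d n" using rQ unfolding Q_def by blast
    have rc: "\<forall>a. a \<notin> exps d \<longrightarrow> r a = 0" using rV unfolding Vset_def by blast
    define c0 where "c0 = smul i e0"
    define c1 where "c1 = smul i e1"
    define cs where "cs = smul (n * i) e1"
    have c0e: "c0 \<in> exps d" unfolding c0_def using smul_exps e0_exps d1 by blast
    have c1e: "c1 \<in> exps d" unfolding c1_def using smul_exps e1_exps assms(1) by blast
    have cse: "cs \<in> exps d" unfolding cs_def using smul_exps e1_exps assms(1) by blast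
    have iwe: "smul i (wv n) \<in> exps d" using smul_exps wv_exps assms(1) by blast
    define t where "t = shift d c0 r"
    have tc: "\<forall>a. a \<notin> exps d \<longrightarrow> t a = 0" unfolding t_def shift_def by simp
    have rsh: "r = mul d (mon c0) t"
    proof -
      have "\<forall>a. r a \<noteq> 0 \<longrightarrow> c0 \<le> a"
      proof (intro allI impI)
        fix a assume "r a \<noteq> 0" hence "i \<le> a 0" using rQ unfolding Q_def by blast
        thus "c0 \<le> a" unfolding c0_def smul_def e0_def by (intro le_funI) simp
      qed
      thus ?thesis unfolding t_def using shift_mul[OF c0e rc] by simp
    qed
    define u where "u = mul d (mon c1) t"
    have uV: "u \<in> Vset d n" unfolding u_def
    proof (rule mon_shift_V[OF c1e tc], intro allI impI)
      fix a assume "t a \<noteq> 0"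
      hence ae: "a \<in> exps d" and ra: "r (\<lambda>j. a j + c0 j) \<noteq> 0" unfolding t_def shift_def by (auto split: if_splits)
      have "n dvd mdeg d (\<lambda>j. a j + c0 j)" using ra rV unfolding Vset_def by blast
      moreover have "mdeg d (\<lambda>j. a j + c0 j) = mdeg d a + i" using mdeg_add mdeg_e0[OF d1] mdeg_smul unfolding c0_def by simp
      moreover have "mdeg d c1 = i" using mdeg_e1[OF assms(1)] mdeg_smul unfolding c1_def by simp
      ultimately show "n dvd mdeg d a + mdeg d c1" by simp
    qed
    have sV: "(mon cs :: 'k mps) \<in> Vset d n" by (rule mon_V[OF cse]) (simp add: cs_def mdeg_smul mdeg_e1[OF assms(1)])
    have sQ: "(mon cs :: 'k mps) \<notin> Q d n 1"
    proof
      assume "(mon cs :: 'k mps) \<in> Q d n 1"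
      moreover have "(mon cs :: 'k mps) cs \<noteq> 0" unfolding mon_def by simp
      moreover have "cs 0 = 0" unfolding cs_def smul_def e1_def by simp
      ultimately show False unfolding Q_def by fastforce
    qed
    have "mul d (mon cs) r = mul d (mon (\<lambda>j. cs j + c0 j)) t"
      unfolding rsh using mul_assoc mon_mon[OF cse c0e] by metis
    also have "(\<lambda>j. cs j + c0 j) = (\<lambda>j. smul i (wv n) j + c1 j)"
    proof (rule ext)
      fix j
      have "n * i = (n - 1) * i + i" using n1 by (simp add: algebra_simps)
      thus "cs j + c0 j = smul i (wv n) j + c1 j"
        unfolding cs_def c0_def c1_def smul_def wv_def e0_def e1_def by (simp add: algebra_simps)
    qed
    also have "mul d (mon (\<lambda>j. smul i (wv n) j + c1 j)) t = mul d (mon (smul i (wv n))) u"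
      unfolding u_def using mul_assoc mon_mon[OF iwe c1e] by metis
    finally have eq: "mul d (mon cs) r = mul d (mon (smul i (wv n))) u" .
    have "mul d (mon cs) r \<in> ideal_pow (Veronese d n) (Lideal d n) i"
      unfolding eq using pow_mon[OF assms(1) n1 uV] .
    thus "r \<in> symbolic_power (Veronese d n) (Lideal d n) i"
      unfolding symbolic_power_def V_carrier V_mult L_eq[OF d1] using rV sV sQ by blast
  qed
qed


lemma V_neg: assumes "f \<in> Vset d n"
  shows "\<ominus>\<^bsub>Veronese d n\<^esub> f = (\<lambda>a. - (f a :: 'k::field))"
proof -
  interpret R: cring "Veronese d n :: 'k mps ring" by (rule cring_V)
  have nV: "(\<lambda>a. - f a) \<in> Vset d n" using assms unfolding Vset_def by simp
  show ?thesis
  proof (rule R.minus_equality)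
    show "(\<lambda>a. - f a) \<oplus>\<^bsub>Veronese d n\<^esub> f = \<zero>\<^bsub>Veronese d n\<^esub>"
      by (simp add: V_add V_zero)
    show "f \<in> carrier (Veronese d n)" using assms by (simp add: V_carrier)
    show "(\<lambda>a. - f a) \<in> carrier (Veronese d n)" using nV by (simp add: V_carrier)
  qed
qed

lemma V_ideal: assumes "I \<subseteq> Vset d n" "(\<lambda>_. 0) \<in> I" "\<And>f g. f\<in>I \<Longrightarrow> g\<in>I \<Longrightarrow> (\<lambda>a. f a + g a) \<in> I"
  "\<And>f. f \<in> I \<Longrightarrow> (\<lambda>a. - f a) \<in> I" "\<And>f r. f \<in> I \<Longrightarrow> r \<in> Vset d n \<Longrightarrow> mul d r f \<in> I"
  shows "ideal I (Veronese d n :: ('k::field) mps ring)"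
proof -
  interpret R: cring "Veronese d n :: 'k mps ring" by (rule cring_V)
  show ?thesis
  proof (rule idealI)
    show "ring (Veronese d n :: 'k mps ring)" by (rule R.ring_axioms)
    show "subgroup I (add_monoid (Veronese d n :: 'k mps ring))"
    proof (rule R.add.subgroupI, goal_cases)
      case 1 show ?case using assms(1) by (simp add: V_carrier)
    next
      case 2 show ?case using assms(2) by blast
    next
      case (3 a) show ?case using V_neg[of a d n] 3 assms(1,4) by auto
    next
      case (4 a b) show ?case using 4 assms(3) by (simp add: V_add)
    qed
    fix a x assume "a \<in> I" "x \<in> carrier (Veronese d n :: 'k mps ring)"
    thus "x \<otimes>\<^bsub>(Veronese d n :: 'k mps ring)\<^esub> a \<in> I" using assms(5) by (simp add: V_carrier V_mult)
    show "a \<otimes>\<^bsub>(Veronese d n :: 'k mps ring)\<^esub> x \<in> I" using assms(5) \<open>a \<in> I\<close> \<open>x \<in> _\<close> by (simp add: V_carrier V_mult mul_comm)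
  qed
qed

lemma Q_ideal: "ideal (Q d n i) (Veronese d n :: ('k::field) mps ring)"
proof (rule V_ideal)
  show "Q d n i \<subseteq> Vset d n" unfolding Q_def by blast
  show "(\<lambda>_. 0) \<in> (Q d n i :: 'k mps set)" unfolding Q_def Vset_def by simp
  show "\<And>f g. f \<in> Q d n i \<Longrightarrow> g \<in> Q d n i \<Longrightarrow> (\<lambda>a. f a + g a) \<in> (Q d n i :: 'k mps set)" by (rule Q_add)
  show "(\<lambda>a. - f a) \<in> Q d n i" if "f \<in> Q d n i" for f :: "'k mps" using that unfolding Q_def Vset_def by simp
  show "mul d r f \<in> Q d n i" if "f \<in> Q d n i" "r \<in> Vset d n" for f r :: "'k mps"
    using Q_mul[of r d n 0 f i] that by (simp add: Q0)
qed

lemma sub_deg: "e \<in> exps d \<Longrightarrow> k \<le> mdeg d e \<Longrightarrow> \<exists>b. b \<le> e \<and> mdeg d b = k"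
proof (induction k)
  case 0
  have "(\<lambda>_. 0::nat) \<le> e" by (rule le_funI) simp
  moreover have "mdeg d (\<lambda>_. 0) = 0" unfolding mdeg_def by simp
  ultimately show ?case by blast
next
  case (Suc k)
  then obtain b where b: "b \<le> e" "mdeg d b = k" by fastforce
  have "\<exists>j<d. b j < e j"
  proof (rule ccontr)
    assume "\<not> (\<exists>j<d. b j < e j)"
    hence "\<forall>j<d. e j \<le> b j" by auto
    hence "mdeg d e \<le> mdeg d b" unfolding mdeg_def by (intro sum_mono) auto
    thus False using b Suc.prems by simp
  qed
  then obtain j where j: "j < d" "b j < e j" by blast
  define b' where "b' = b(j := Suc (b j))"
  have "b' \<le> e" unfolding b'_def using j le_funD[OF b(1)] by (intro le_funI) simp
  moreover have "mdeg d b' = Suc k"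
  proof -
    have "mdeg d b' = (\<Sum>i<d. b i) + 1" unfolding b'_def mdeg_def using j(1)
      by (simp add: sum.remove[of "{..<d}" j] )
    thus ?thesis using b(2) unfolding mdeg_def by simp
  qed
  ultimately show ?case by blast
qed


definition Gexp :: "nat \<Rightarrow> nat \<Rightarrow> nat \<Rightarrow> (nat \<Rightarrow> nat) set" where
  "Gexp d n i = {c \<in> exps d. mdeg d c = n \<and> i \<le> c 0}"

lemma fin_Gexp: "finite (Gexp d n i)"
  using fin_deg[of d n] unfolding Gexp_def by (rule finite_subset[rotated]) blast

lemma mdeg_ge0: "1 \<le> d \<Longrightarrow> m 0 \<le> mdeg d m"
  unfolding mdeg_def by (rule member_le_sum) auto

lemma ch_ex: assumes "1 \<le> d" "1 \<le> i" "i \<le> n" "m \<in> exps d" "n dvd mdeg d m" "i \<le> m 0"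
  shows "\<exists>c. c \<in> Gexp d n i \<and> c \<le> m"
proof -
  have "0 < mdeg d m" using mdeg_ge0[OF assms(1), of m] assms by simp
  hence nm: "n \<le> mdeg d m" using assms(5) by (simp add: dvd_imp_le)
  define c0 where "c0 = smul i e0"
  have c0m: "c0 \<le> m" unfolding c0_def smul_def e0_def using assms(6) by (intro le_funI) simp
  define e where "e = (\<lambda>j. m j - c0 j)"
  have ee: "e \<in> exps d" unfolding e_def using exps_diff[OF assms(4)] .
  have dc0: "mdeg d c0 = i" unfolding c0_def using mdeg_smul mdeg_e0[OF assms(1)] by simp
  have "mdeg d m = i + mdeg d e" unfolding e_def using mdeg_diff[OF c0m] dc0 by simp
  hence "n - i \<le> mdeg d e" using nm by simp
  then obtain b where b: "b \<le> e" "mdeg d b = n - i" using sub_deg[OF ee] by blast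
  define c where "c = (\<lambda>j. c0 j + b j)"
  have be: "b \<in> exps d" using le_exps[OF b(1) ee] .
  have c0e: "c0 \<in> exps d" unfolding c0_def using smul_exps e0_exps assms(1) by blast
  have "c \<in> exps d" unfolding c_def using add_exps[OF c0e be] .
  moreover have "mdeg d c = n" unfolding c_def using mdeg_add dc0 b(2) assms(3) by simp
  moreover have "i \<le> c 0" unfolding c_def c0_def smul_def e0_def by simp
  moreover have "c \<le> m"
  proof (rule le_funI)
    fix j have "b j \<le> m j - c0 j" using le_funD[OF b(1)] unfolding e_def by simp
    thus "c j \<le> m j" unfolding c_def using le_funD[OF c0m, of j] by simp
  qed
  ultimately show ?thesis unfolding Gexp_def by blast
qed

definition ch :: "nat \<Rightarrow> nat \<Rightarrow> nat \<Rightarrow> (nat \<Rightarrow> nat) \<Rightarrow> (nat \<Rightarrow> nat)" where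
  "ch d n i m = (SOME c. c \<in> Gexp d n i \<and> c \<le> m)"

definition hc :: "nat \<Rightarrow> nat \<Rightarrow> nat \<Rightarrow> ('k::field) mps \<Rightarrow> (nat \<Rightarrow> nat) \<Rightarrow> 'k mps" where
  "hc d n i f c = (\<lambda>x. if x \<in> exps d \<and> ch d n i (\<lambda>j. x j + c j) = c then f (\<lambda>j. x j + c j) else 0)"

lemma hc_V: assumes "f \<in> Vset d n" "c \<in> Gexp d n i" shows "hc d n i f c \<in> Vset d n"
  unfolding Vset_def
proof (intro CollectI conjI allI impI)
  fix x assume "x \<notin> exps d" thus "hc d n i f c x = 0" unfolding hc_def by simp
next
  fix x assume "hc d n i f c x \<noteq> 0"
  hence "f (\<lambda>j. x j + c j) \<noteq> 0" unfolding hc_def by (auto split: if_splits)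
  hence "n dvd mdeg d (\<lambda>j. x j + c j)" using assms(1) unfolding Vset_def by blast
  moreover have "mdeg d c = n" using assms(2) unfolding Gexp_def by blast
  ultimately show "n dvd mdeg d x" using mdeg_add[of d x c] by (simp add: dvd_add_left_iff)
qed

lemma decomp: assumes "1 \<le> d" "1 \<le> i" "i \<le> n" "f \<in> Q d n i"
  shows "f = (\<lambda>m. \<Sum>c\<in>Gexp d n i. mul d (mon c) (hc d n i f c) m)"
proof (rule ext)
  fix m
  have fV: "f \<in> Vset d n" using assms(4) unfolding Q_def by blast
  have Ge: "\<And>c. c \<in> Gexp d n i \<Longrightarrow> c \<in> exps d" unfolding Gexp_def by blast
  have "(\<Sum>c\<in>Gexp d n i. mul d (mon c) (hc d n i f c) m) = (\<Sum>c\<in>Gexp d n i. if c = ch d n i m then f m else 0)"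
  proof (rule sum.cong[OF refl])
    fix c assume cG: "c \<in> Gexp d n i"
    show "mul d (mon c) (hc d n i f c) m = (if c = ch d n i m then f m else 0)"
    proof (cases "f m = 0")
      case True
      have "mul d (mon c) (hc d n i f c) m = 0"
      proof (cases "m \<in> exps d \<and> c \<le> m")
        case True
        have "(\<lambda>j. m j - c j + c j) = m" using le_funD[of c m] True by (intro ext) simp
        thus ?thesis unfolding mul_mon[OF Ge[OF cG]] hc_def using \<open>f m = 0\<close> by simp
      next
        case False thus ?thesis unfolding mul_mon[OF Ge[OF cG]] by (simp only: if_not_P[OF False] if_False)
      qed
      thus ?thesis using True by simp
    next
      case False
      have me: "m \<in> exps d" using False fV unfolding Vset_def by blast
      have "n dvd mdeg d m" using False fV unfolding Vset_def by blast
      moreover have "i \<le> m 0" using False assms(4) unfolding Q_def by blast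
      ultimately have "\<exists>c. c \<in> Gexp d n i \<and> c \<le> m" using ch_ex[OF assms(1-3) me] by blast
      hence chm: "ch d n i m \<in> Gexp d n i \<and> ch d n i m \<le> m" unfolding ch_def by (rule someI_ex)
      show ?thesis
      proof (cases "c \<le> m")
        case True
        have e: "(\<lambda>j. m j - c j + c j) = m" using le_funD[of c m] True by (intro ext) simp
        show ?thesis unfolding mul_mon[OF Ge[OF cG]] hc_def using True me e exps_diff[OF me, of c] by auto
      next
        case False
        hence "c \<noteq> ch d n i m" using chm by blast
        moreover have "\<not> (m \<in> exps d \<and> c \<le> m)" using False by simp
        ultimately show ?thesis unfolding mul_mon[OF Ge[OF cG]] by (simp only: if_not_P if_False)
      qed
    qed
  qed
  also have "\<dots> = f m"
  proof (cases "f m = 0")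
    case True
    have "\<forall>c\<in>Gexp d n i. (if c = ch d n i m then f m else 0) = 0" using True by simp
    hence "(\<Sum>c\<in>Gexp d n i. if c = ch d n i m then f m else 0) = 0" by (rule sum.neutral)
    thus ?thesis using True by simp
  next
    case False
    have me: "m \<in> exps d" using False fV unfolding Vset_def by blast
    have "n dvd mdeg d m" using False fV unfolding Vset_def by blast
    moreover have "i \<le> m 0" using False assms(4) unfolding Q_def by blast
    ultimately have "\<exists>c. c \<in> Gexp d n i \<and> c \<le> m" using ch_ex[OF assms(1-3) me] by blast
    hence chm: "ch d n i m \<in> Gexp d n i \<and> ch d n i m \<le> m" unfolding ch_def by (rule someI_ex)
    thus ?thesis using fin_Gexp by (simp add: sum.delta')
  qed
  finally show "f m = (\<Sum>c\<in>Gexp d n i. mul d (mon c) (hc d n i f c) m)" by simp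
qed

lemma genideal_G: assumes "1 \<le> d" "1 \<le> i" "i \<le> n"
  shows "genideal (Veronese d n) (mon ` Gexp d n i) = (Q d n i :: ('k::field) mps set)"
proof -
  interpret R: cring "Veronese d n :: 'k mps ring" by (rule cring_V)
  have GQ: "(mon ` Gexp d n i :: 'k mps set) \<subseteq> Q d n i"
  proof
    fix g :: "'k mps" assume "g \<in> mon ` Gexp d n i"
    then obtain c where c: "c \<in> Gexp d n i" "g = mon c" by blast
    have "g \<in> Vset d n" unfolding c(2) using c(1) unfolding Gexp_def by (intro mon_V) auto
    moreover have "\<forall>a. g a \<noteq> 0 \<longrightarrow> i \<le> a 0" using c unfolding mon_def Gexp_def by auto
    ultimately show "g \<in> Q d n i" unfolding Q_def by blast
  qed
  have GC: "(mon ` Gexp d n i :: 'k mps set) \<subseteq> carrier (Veronese d n)"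
    using GQ unfolding Q_def V_carrier by blast
  interpret I: ideal "genideal (Veronese d n) (mon ` Gexp d n i) :: 'k mps set" "Veronese d n"
    by (rule R.genideal_ideal[OF GC])
  show ?thesis
  proof
    show "genideal (Veronese d n) (mon ` Gexp d n i) \<subseteq> (Q d n i :: 'k mps set)"
      by (rule R.genideal_minimal[OF Q_ideal GQ])
  next
    show "(Q d n i :: 'k mps set) \<subseteq> genideal (Veronese d n) (mon ` Gexp d n i)"
    proof
      fix f :: "'k mps" assume fQ: "f \<in> Q d n i"
      have fV: "f \<in> Vset d n" using fQ unfolding Q_def by blast
      have "C \<subseteq> Gexp d n i \<Longrightarrow> (\<lambda>m. \<Sum>c\<in>C. mul d (mon c) (hc d n i f c) m) \<in> genideal (Veronese d n) (mon ` Gexp d n i)"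
        for C
      proof (induction C rule: infinite_finite_induct)
        case (infinite C) thus ?case using I.zero_closed by (simp add: V_zero)
      next
        case empty thus ?case using I.zero_closed by (simp add: V_zero)
      next
        case (insert c C)
        have cG: "c \<in> Gexp d n i" using insert.prems by blast
        have "(mon c :: 'k mps) \<in> mon ` Gexp d n i" using cG by (rule imageI)
        hence mc: "(mon c :: 'k mps) \<in> genideal (Veronese d n) (mon ` Gexp d n i)"
          using R.genideal_self[OF GC] by (rule subsetD[rotated])
        have hcc: "hc d n i f c \<in> carrier (Veronese d n)" using hc_V[OF fV cG] by (simp add: V_carrier)
        have "hc d n i f c \<otimes>\<^bsub>Veronese d n\<^esub> mon c \<in> genideal (Veronese d n) (mon ` Gexp d n i)"
          by (rule I.I_l_closed[OF mc hcc])
        hence a: "mul d (mon c) (hc d n i f c) \<in> genideal (Veronese d n) (mon ` Gexp d n i)"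
          unfolding V_mult mul_comm[of d "hc d n i f c"] .
        have b: "(\<lambda>m. \<Sum>c\<in>C. mul d (mon c) (hc d n i f c) m) \<in> genideal (Veronese d n) (mon ` Gexp d n i)"
          using insert.IH insert.prems by blast
        have "mul d (mon c) (hc d n i f c) \<oplus>\<^bsub>Veronese d n\<^esub> (\<lambda>m. \<Sum>c\<in>C. mul d (mon c) (hc d n i f c) m) \<in> genideal (Veronese d n) (mon ` Gexp d n i)"
          using I.a_closed[OF a b] .
        thus ?case using insert.hyps by (simp add: V_add)
      qed
      hence "(\<lambda>m. \<Sum>c\<in>Gexp d n i. mul d (mon c) (hc d n i f c) m) \<in> genideal (Veronese d n) (mon ` Gexp d n i)" by blast
      thus "f \<in> genideal (Veronese d n) (mon ` Gexp d n i)" using decomp[OF assms fQ] by simp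
    qed
  qed
qed


interpretation fvs: vector_space "(\<lambda>c f x. c * f x) :: 'k::field \<Rightarrow> ('x \<Rightarrow> 'k) \<Rightarrow> ('x \<Rightarrow> 'k)"
  by unfold_locales (simp_all add: plus_fun_def fun_eq_iff algebra_simps)

lemma sum_fun_apply: "(\<Sum>w\<in>t. (F w :: 'x \<Rightarrow> 'k::field)) x = (\<Sum>w\<in>t. F w x)"
  by (induction t rule: infinite_finite_induct) (simp_all add: plus_fun_def zero_fun_def)

lemma mon_Q: assumes "c \<in> Gexp d n i" shows "(mon c :: ('k::field) mps) \<in> Q d n i"
proof -
  have "(mon c :: 'k mps) \<in> Vset d n" using assms unfolding Gexp_def by (intro mon_V) auto
  moreover have "\<forall>a. (mon c :: 'k mps) a \<noteq> 0 \<longrightarrow> i \<le> a 0" using assms unfolding mon_def Gexp_def by auto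
  ultimately show ?thesis unfolding Q_def by blast
qed

lemma mul_at_G: assumes "1 \<le> d" "1 \<le> i" "c \<in> Gexp d n i" "f \<in> Q d n i"
  shows "mul d r f c = r (\<lambda>_. 0) * (f c :: 'k::field)"
proof -
  have ce: "c \<in> exps d" and dc: "mdeg d c = n" using assms(3) unfolding Gexp_def by auto
  have z: "(\<lambda>_. 0::nat) \<le> c" by (rule le_funI) simp
  have "(\<Sum>a\<in>{a. a \<le> c}. r a * f (\<lambda>j. c j - a j)) = (\<Sum>a\<in>{a. a \<le> c}. if (\<lambda>_. 0) = a then r (\<lambda>_. 0) * f c else 0)"
  proof (rule sum.cong[OF refl])
    fix a assume "a \<in> {a. a \<le> c}"
    hence ac: "a \<le> c" by simp
    show "r a * f (\<lambda>j. c j - a j) = (if (\<lambda>_. 0) = a then r (\<lambda>_. 0) * f c else 0)"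
    proof (cases "(\<lambda>_. 0) = a")
      case True hence "a = (\<lambda>_. 0)" by simp
      thus ?thesis by simp
    next
      case False
      have "f (\<lambda>j. c j - a j) = 0"
      proof (rule ccontr)
        assume h: "f (\<lambda>j. c j - a j) \<noteq> 0"
        hence "n dvd mdeg d (\<lambda>j. c j - a j)" and "i \<le> c 0 - a 0" using assms(4) unfolding Q_def Vset_def by auto
        moreover have "c 0 - a 0 \<le> mdeg d (\<lambda>j. c j - a j)" using mdeg_ge0[OF assms(1), of "\<lambda>j. c j - a j"] by simp
        ultimately have "0 < mdeg d (\<lambda>j. c j - a j)" using assms(2) by simp
        hence "n \<le> mdeg d (\<lambda>j. c j - a j)" using \<open>n dvd _\<close> by (simp add: dvd_imp_le)
        hence "mdeg d a = 0" using mdeg_diff[OF ac] dc by simp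
        hence "\<forall>j<d. a j = 0" unfolding mdeg_def by simp
        moreover have "a \<in> exps d" using le_exps[OF ac ce] .
        ultimately have "a = (\<lambda>_. 0)" unfolding exps_def
        proof (intro ext)
          fix x assume "\<forall>j<d. a j = 0" "a \<in> {a. \<forall>j\<ge>d. a j = 0}"
          thus "a x = 0" by (cases "x < d") auto
        qed
        thus False using False by simp
      qed
      thus ?thesis using False by simp
    qed
  qed
  also have "\<dots> = r (\<lambda>_. 0) * f c" using fin_le[OF ce] z by (simp add: sum.delta)
  finally show ?thesis using ce unfolding mul_def by simp
qed

definition vec :: "nat \<Rightarrow> nat \<Rightarrow> nat \<Rightarrow> ('k::field) mps \<Rightarrow> (nat \<Rightarrow> nat) \<Rightarrow> 'k" where
  "vec d n i f = (\<lambda>c. if c \<in> Gexp d n i then f c else 0)"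

lemma lower: assumes "1 \<le> d" "1 \<le> i" "finite H" "H \<subseteq> Vset d n"
  "genideal (Veronese d n) H = (Q d n i :: ('k::field) mps set)"
  shows "card (Gexp d n i) \<le> card H"
proof -
  interpret R: cring "Veronese d n :: 'k mps ring" by (rule cring_V)
  define S where "S = vec d n i ` H"
  define T where "T = (\<lambda>c. vec d n i (mon c :: 'k mps)) ` Gexp d n i"
  have finS: "finite S" unfolding S_def using assms(3) by simp
  have cardS: "card S \<le> card H" unfolding S_def using assms(3) by (rule card_image_le)
  have vmon: "\<And>c. c \<in> Gexp d n i \<Longrightarrow> vec d n i (mon c :: 'k mps) = (\<lambda>x. if x = c then 1 else 0)"
  proof (rule ext)
    fix c x assume "c \<in> Gexp d n i"
    thus "vec d n i (mon c :: 'k mps) x = (if x = c then 1 else 0)"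
      unfolding vec_def mon_def by (cases "x = c") auto
  qed
  have injT: "inj_on (\<lambda>c. vec d n i (mon c :: 'k mps)) (Gexp d n i)"
  proof (rule inj_onI)
    fix x y assume "x \<in> Gexp d n i" "y \<in> Gexp d n i" "vec d n i (mon x :: 'k mps) = vec d n i (mon y)"
    hence "(\<lambda>z. if z = x then 1 else 0 :: 'k) = (\<lambda>z. if z = y then 1 else 0)" using vmon by simp
    hence "(if x = x then 1 else 0 :: 'k) = (if x = y then 1 else 0)" by (rule fun_cong)
    thus "x = y" by (cases "x = y") auto
  qed
  have cardT: "card T = card (Gexp d n i)" unfolding T_def using card_image[OF injT] .
  have indT: "fvs.independent T"
    unfolding fvs.independent_explicit_module
  proof (intro allI impI)
    fix t u v assume t: "finite t" "t \<subseteq> T" "(\<Sum>v\<in>t. (\<lambda>x. u v * v x)) = 0" "v \<in> t"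
    then obtain c where c: "c \<in> Gexp d n i" "v = vec d n i (mon c :: 'k mps)" unfolding T_def by blast
    have "(\<Sum>w\<in>t. (\<lambda>x. u w * w x)) c = 0" using t(3) by simp
    hence "(\<Sum>w\<in>t. u w * w c) = 0" by (simp add: sum_fun_apply)
    moreover have "(\<Sum>w\<in>t. u w * w c) = (\<Sum>w\<in>t. if w = v then u v else 0)"
    proof (rule sum.cong[OF refl])
      fix w assume "w \<in> t"
      then obtain c' where c': "c' \<in> Gexp d n i" "w = vec d n i (mon c' :: 'k mps)" using t(2) unfolding T_def by blast
      show "u w * w c = (if w = v then u v else 0)"
      proof (cases "c' = c")
        case True thus ?thesis using c c' vmon by simp
      next
        case False
        hence "w \<noteq> v"
        proof -
          have "w c = 0" using c' vmon False by simp
          moreover have "v c = 1" using c vmon by simp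
          ultimately show ?thesis by auto
        qed
        thus ?thesis using c' vmon False by simp
      qed
    qed
    moreover have "(\<Sum>w\<in>t. if w = v then u v else 0) = u v" using t(1,4) by (simp add: sum.delta')
    ultimately show "u v = 0" by simp
  qed
  define W where "W = {f \<in> Q d n i. vec d n i f \<in> fvs.span S}"
  have Wid: "ideal W (Veronese d n :: 'k mps ring)"
  proof (rule V_ideal)
    show "W \<subseteq> Vset d n" unfolding W_def Q_def by blast
    have "vec d n i (\<lambda>_. 0 :: 'k) = 0" unfolding vec_def by (simp add: fun_eq_iff)
    thus "(\<lambda>_. 0) \<in> W" unfolding W_def using Q_ideal[of d n i] fvs.span_zero
      by (simp add: Q_def Vset_def)
  next
    fix f g :: "'k mps" assume "f \<in> W" "g \<in> W"
    moreover have "vec d n i (\<lambda>a. f a + g a) = vec d n i f + vec d n i g" unfolding vec_def by (simp add: fun_eq_iff)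
    ultimately show "(\<lambda>a. f a + g a) \<in> W" unfolding W_def using Q_add fvs.span_add by auto
  next
    fix f :: "'k mps" assume "f \<in> W"
    moreover have "vec d n i (\<lambda>a. - f a) = - vec d n i f" unfolding vec_def by (simp add: fun_eq_iff)
    ultimately show "(\<lambda>a. - f a) \<in> W" unfolding W_def Q_def Vset_def using fvs.span_neg by auto
  next
    fix f r :: "'k mps" assume fW: "f \<in> W" and rV: "r \<in> Vset d n"
    have fQ: "f \<in> Q d n i" using fW unfolding W_def by blast
    have "mul d r f \<in> Q d n i" using Q_mul[of r d n 0 f i] fQ rV by (simp add: Q0)
    moreover have "vec d n i (mul d r f) = (\<lambda>x. r (\<lambda>_. 0) * vec d n i f x)"
      unfolding vec_def using mul_at_G[OF assms(1,2) _ fQ] by (simp add: fun_eq_iff)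
    moreover have "(\<lambda>x. r (\<lambda>_. 0) * vec d n i f x) \<in> fvs.span S"
      using fW unfolding W_def by (intro fvs.span_scale) simp
    ultimately show "mul d r f \<in> W" unfolding W_def by simp
  qed
  have HW: "H \<subseteq> W"
  proof
    fix h assume "h \<in> H"
    moreover have "H \<subseteq> Q d n i" using R.genideal_self[of H] assms(4,5) by (simp add: V_carrier)
    moreover have "vec d n i h \<in> fvs.span S" unfolding S_def using \<open>h \<in> H\<close> by (intro fvs.span_base) simp
    ultimately show "h \<in> W" unfolding W_def by blast
  qed
  have "Q d n i \<subseteq> W" using R.genideal_minimal[OF Wid HW] assms(5) by simp
  hence "T \<subseteq> fvs.span S" unfolding T_def W_def using mon_Q by blast
  from fvs.independent_span_bound[OF finS indT this] have "card T \<le> card S" by simp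
  thus ?thesis using cardT cardS by simp
qed


lemma mset_decomp: "set_mset M \<subseteq> {..<(d::nat)} \<Longrightarrow> M = (\<Sum>j<d. replicate_mset (count M j) j)"
proof (rule multiset_eqI)
  fix x assume h: "set_mset M \<subseteq> {..<d}"
  have "count (\<Sum>j<d. replicate_mset (count M j) j) x = (\<Sum>j<d. if x = j then count M j else 0)"
    by (simp add: count_sum)
  also have "\<dots> = (if x < d then count M x else 0)" by (subst sum.delta') auto
  also have "\<dots> = count M x" using h by (auto simp: not_less count_eq_zero_iff)
  finally show "count M x = count (\<Sum>j<d. replicate_mset (count M j) j) x" by simp
qed

lemma card_deg: "card {b \<in> exps d. mdeg d b = D} = (d + D - 1) choose D"
proof -
  have "bij_betw (\<lambda>M j. count M j) (multisets_of_size {..<d} D) {b \<in> exps d. mdeg d b = D}"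
  proof (rule bij_betw_byWitness[where f'="\<lambda>b. \<Sum>j<d. replicate_mset (b j) j"])
    show "\<forall>M\<in>multisets_of_size {..<d} D. (\<Sum>j<d. replicate_mset (count M j) j) = M"
      unfolding multisets_of_size_def using mset_decomp by (metis (mono_tags, lifting) mem_Collect_eq)
    show "\<forall>b\<in>{b \<in> exps d. mdeg d b = D}. (\<lambda>j. count (\<Sum>j<d. replicate_mset (b j) j) j) = b"
    proof (intro ballI ext)
      fix b x assume "b \<in> {b \<in> exps d. mdeg d b = D}"
      hence be: "b \<in> exps d" by simp
      have "count (\<Sum>j<d. replicate_mset (b j) j) x = (\<Sum>j<d. if x = j then b j else 0)"
        by (simp add: count_sum)
      also have "\<dots> = b x" using be unfolding exps_def by (simp add: sum.delta sum.delta' not_less)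
      finally show "count (\<Sum>j<d. replicate_mset (b j) j) x = b x" .
    qed
    show "(\<lambda>M j. count M j) ` multisets_of_size {..<d} D \<subseteq> {b \<in> exps d. mdeg d b = D}"
    proof
      fix b assume "b \<in> (\<lambda>M j. count M j) ` multisets_of_size {..<d} D"
      then obtain M where M: "set_mset M \<subseteq> {..<d}" "size M = D" "b = (\<lambda>j. count M j)"
        unfolding multisets_of_size_def by blast
      have "b \<in> exps d" unfolding exps_def M(3) using M(1) by (auto simp: count_eq_zero_iff)
      moreover have "mdeg d b = D"
      proof -
        have "size M = size (\<Sum>j<d. replicate_mset (count M j) j)" using mset_decomp[OF M(1)] by simp
        also have "\<dots> = (\<Sum>j<d. count M j)" by simp
        finally show ?thesis unfolding mdeg_def M(3) using M(2) by simp
      qed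
      ultimately show "b \<in> {b \<in> exps d. mdeg d b = D}" by simp
    qed
    show "(\<lambda>b. \<Sum>j<d. replicate_mset (b j) j) ` {b \<in> exps d. mdeg d b = D} \<subseteq> multisets_of_size {..<d} D"
    proof
      fix M assume "M \<in> (\<lambda>b. \<Sum>j<d. replicate_mset (b j) j) ` {b \<in> exps d. mdeg d b = D}"
      then obtain b where b: "b \<in> exps d" "mdeg d b = D" "M = (\<Sum>j<d. replicate_mset (b j) j)" by blast
      have "set_mset M \<subseteq> {..<d}"
      proof
        fix x assume "x \<in># M"
        hence "count M x \<noteq> 0" by simp
        moreover have "count M x = (\<Sum>j<d. if x = j then b j else 0)" unfolding b(3) by (simp add: count_sum)
        ultimately have "x < d" by (cases "x < d") (simp_all add: sum.delta sum.delta')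
        thus "x \<in> {..<d}" by simp
      qed
      moreover have "size M = D" using b unfolding mdeg_def by simp
      ultimately show "M \<in> multisets_of_size {..<d} D" unfolding multisets_of_size_def by simp
    qed
  qed
  hence "card {b \<in> exps d. mdeg d b = D} = card (multisets_of_size {..<d} D)"
    by (simp add: bij_betw_same_card)
  also have "\<dots> = (d + D - 1) choose D" by (simp add: card_multisets_of_size)
  finally show ?thesis .
qed

lemma card_Gexp: assumes "1 \<le> d" "i \<le> n"
  shows "card (Gexp d n i) = (n - i + d - 1) choose (d - 1)"
proof -
  define c0 where "c0 = smul i e0"
  have c0e: "c0 \<in> exps d" unfolding c0_def using smul_exps e0_exps assms(1) by blast
  have dc0: "mdeg d c0 = i" unfolding c0_def using mdeg_smul mdeg_e0[OF assms(1)] by simp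
  have "bij_betw (\<lambda>b j. b j + c0 j) {b \<in> exps d. mdeg d b = n - i} (Gexp d n i)"
  proof (rule bij_betw_byWitness[where f'="\<lambda>c j. c j - c0 j"])
    show "\<forall>a\<in>{b \<in> exps d. mdeg d b = n - i}. (\<lambda>j. a j + c0 j - c0 j) = a" by simp
    show "\<forall>a'\<in>Gexp d n i. (\<lambda>j. (a' j - c0 j) + c0 j) = a'"
    proof (intro ballI ext)
      fix a' j assume "a' \<in> Gexp d n i"
      hence "i \<le> a' 0" unfolding Gexp_def by simp
      thus "a' j - c0 j + c0 j = a' j" unfolding c0_def smul_def e0_def by simp
    qed
    show "(\<lambda>b j. b j + c0 j) ` {b \<in> exps d. mdeg d b = n - i} \<subseteq> Gexp d n i"
    proof
      fix c assume "c \<in> (\<lambda>b j. b j + c0 j) ` {b \<in> exps d. mdeg d b = n - i}"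
      then obtain b where b: "b \<in> exps d" "mdeg d b = n - i" "c = (\<lambda>j. b j + c0 j)" by blast
      have "c \<in> exps d" using add_exps[OF b(1) c0e] b(3) by simp
      moreover have "mdeg d c = n" using b mdeg_add dc0 assms(2) by simp
      moreover have "i \<le> c 0" using b(3) unfolding c0_def smul_def e0_def by simp
      ultimately show "c \<in> Gexp d n i" unfolding Gexp_def by simp
    qed
    show "(\<lambda>c j. c j - c0 j) ` Gexp d n i \<subseteq> {b \<in> exps d. mdeg d b = n - i}"
    proof
      fix b assume "b \<in> (\<lambda>c j. c j - c0 j) ` Gexp d n i"
      then obtain c where c: "c \<in> Gexp d n i" "b = (\<lambda>j. c j - c0 j)" by blast
      have ce: "c \<in> exps d" and dc: "mdeg d c = n" and ic: "i \<le> c 0" using c(1) unfolding Gexp_def by auto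
      have c0c: "c0 \<le> c" unfolding c0_def smul_def e0_def using ic by (intro le_funI) simp
      have "b \<in> exps d" using exps_diff[OF ce] c(2) by simp
      moreover have "mdeg d b = n - i" using mdeg_diff[OF c0c] dc dc0 c(2) by simp
      ultimately show "b \<in> {b \<in> exps d. mdeg d b = n - i}" by simp
    qed
  qed
  hence "card (Gexp d n i) = card {b \<in> exps d. mdeg d b = n - i}" by (simp add: bij_betw_same_card)
  also have "\<dots> = (d + (n - i) - 1) choose (n - i)" by (rule card_deg)
  also have "\<dots> = (n - i + d - 1) choose (d - 1)"
  proof -
    have e: "d + (n - i) - 1 = n - i + d - 1" by simp
    have "(n - i + d - 1) choose (n - i) = (n - i + d - 1) choose (n - i + d - 1 - (n - i))"
      using assms(1) by (intro binomial_symmetric) simp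
    moreover have "n - i + d - 1 - (n - i) = d - 1" using assms(1) by simp
    ultimately show ?thesis using e by simp
  qed
  finally show ?thesis .
qed

theorem lemma3p18:
  fixes d n i :: nat
  assumes "2 \<le> d" and "1 < n" and "1 \<le> i" and "i \<le> n - 1"
  shows "min_gens (Veronese d n :: ('k::field) mps ring)
            (symbolic_power (Veronese d n :: 'k mps ring) (Lideal d n) i)
         = (n - i + d - 1) choose (d - 1)"
proof -
  have d1: "1 \<le> d" and iN: "i \<le> n" using assms by auto
  have "symbolic_power (Veronese d n :: 'k mps ring) (Lideal d n) i = Q d n i"
    by (rule symb_eq[OF assms(1-3)])
  hence "min_gens (Veronese d n :: 'k mps ring) (symbolic_power (Veronese d n :: 'k mps ring) (Lideal d n) i)
      = (LEAST m. \<exists>G. finite G \<and> G \<subseteq> carrier (Veronese d n :: 'k mps ring) \<and> card G = m \<and> genideal (Veronese d n) G = Q d n i)"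
    unfolding min_gens_def by simp
  also have "\<dots> = card (Gexp d n i)"
  proof (rule Least_equality)
    have inj: "inj_on (mon :: _ \<Rightarrow> 'k mps) (Gexp d n i)"
    proof (rule inj_onI)
      fix x y assume "(mon x :: 'k mps) = mon y"
      hence "(mon x :: 'k mps) x = mon y x" by simp
      thus "x = y" unfolding mon_def by (cases "x = y") auto
    qed
    have "(mon ` Gexp d n i :: 'k mps set) \<subseteq> carrier (Veronese d n)"
      using mon_Q unfolding Q_def V_carrier by blast
    moreover have "card (mon ` Gexp d n i :: 'k mps set) = card (Gexp d n i)" using card_image[OF inj] .
    moreover have "genideal (Veronese d n) (mon ` Gexp d n i :: 'k mps set) = Q d n i"
      by (rule genideal_G[OF d1 assms(3) iN])
    moreover have "finite (mon ` Gexp d n i :: 'k mps set)" using fin_Gexp by simp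
    ultimately show "\<exists>G. finite G \<and> G \<subseteq> carrier (Veronese d n :: 'k mps ring) \<and> card G = card (Gexp d n i) \<and> genideal (Veronese d n) G = Q d n i"
      by blast
  next
    fix m assume "\<exists>G. finite G \<and> G \<subseteq> carrier (Veronese d n :: 'k mps ring) \<and> card G = m \<and> genideal (Veronese d n) G = (Q d n i :: 'k mps set)"
    then obtain G :: "'k mps set" where G: "finite G" "G \<subseteq> Vset d n" "card G = m" "genideal (Veronese d n) G = Q d n i"
      unfolding V_carrier by blast
    show "card (Gexp d n i) \<le> m" using lower[OF d1 assms(3) G(1,2,4)] G(3) by simp
  qed
  also have "\<dots> = (n - i + d - 1) choose (d - 1)" by (rule card_Gexp[OF d1 iN])
  finally show ?thesis .
qed

end
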